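(* Let $n\ge2$, $d\ge1$, $\alpha\in(0,1)$ and let $\boldsymbol\sigma$ be arbitrary positive noise levels (heteroscedastic model with $\sigma_i^\#=\sigma_{\pi^*(i)}$). Let $$\kappa=4\max\Big\{\Big(2\log\frac{8n^2}{\alpha}\Big)^{1/2},\ \Big(d\log\frac{4n^2}{\alpha}\Big)^{1/4}\Big\}$$ and $\bar\Theta_\kappa=\{\boldsymbol\theta\in(\mathbb R^d)^n:\ \bar\kappa(\boldsymbol\theta,\boldsymbol\sigma)\ge\kappa\}$. If $\hat\pi$ is either $\pi^{\mathrm{LSNS}}$ (computed with the known noise levels) or $\pi^{\mathrm{LSL}}$, then $$\max_{\pi^*\in\mathfrak S_n}\ \sup_{\boldsymbol\theta\in\bar\Theta_\kappa}\mathbf E_{\boldsymbol\theta,\boldsymbol\sigma,\pi^*}\big[\delta_H(\hat\pi,\pi^* )\big]\le\alpha.$$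
   Context: Model: integers $n\ge2$, $d\ge1$. Unknown parameters: $\boldsymbol\theta=(\theta_1,\dots,\theta_n)$ with $\theta_i\in\mathbb R^d$, noise levels $\boldsymbol\sigma=(\sigma_1,\dots,\sigma_n)$ with $\sigma_i>0$, and a permutation $\pi^*\in\mathfrak S_n$ (the symmetric group on $\{1,\dots,n\}$). One observes $X_i=\theta_i+\sigma_i\xi_i$, $X_i^\#=\theta_{\pi^*(i)}+\sigma_i^\#\xi_i^\#$, $i=1,\dots,n$, where $\sigma_i^\#=\sigma_{\pi^*(i)}$ and $\xi_1,\dots,\xi_n,\xi_1^\#,\dots,\xi_n^\#$ are i.i.d. $\mathcal N(0,I_d)$. The law of the data is $\mathbf P_{\boldsymbol\theta,\boldsymbol\sigma,\pi^*}$ with expectation $\mathbf E_{\boldsymbol\theta,\boldsymbol\sigma,\pi^*}$. Ties in argmins are broken arbitrarily (measurably). Estimators: $\pi^{\mathrm{LSNS}}=\arg\min_{\pi\in\mathfrak S_n}\sum_{i=1}^n\frac{\|X_{\pi(i)}-X_i^\#\|^2}{\sigma_{\pi(i)}^2+(\sigma_i^\#)^2}$ and $\pi^{\mathrm{LSL}}=\arg\min_{\pi\in\mathfrak S_n}\sum_{i=1}^n\log\|X_{\pi(i)}-X_i^\#\|^2$. Relative separation distance: $\bar\kappa(\boldsymbol\theta,\boldsymbol\sigma)=\min_{i\ne j}\frac{\|\theta_i-\theta_j\|}{(\sigma_i^2+\sigma_j^2)^{1/2}}$. Normalized Hamming distance: $\delta_H(\pi,\pi')=\frac1n\sum_{k=1}^n\mathbb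 1_{\{\pi(k)\ne\pi'(k)\}}$. *)

theory Defs
  imports "HOL-Probability.Probability" "HOL-Combinatorics.Permutations"
begin

(* Coordinates: index (b,i,k) with b = False for the first sample X_i, b = True for
   the second sample X^#_i, i < n the item index (0-based), k < d the coordinate. *)
definition idx :: "nat \<Rightarrow> nat \<Rightarrow> (bool \<times> nat \<times> nat) set" where
  "idx n d = UNIV \<times> {..<n} \<times> {..<d}"

definition noise :: "nat \<Rightarrow> nat \<Rightarrow> (bool \<times> nat \<times> nat \<Rightarrow> real) measure" where
  "noise n d = PiM (idx n d) (\<lambda>_. density lborel std_normal_density)"

definition obs_space :: "nat \<Rightarrow> nat \<Rightarrow> (bool \<times> nat \<times> nat \<Rightarrow> real) measure" where
  "obs_space n d = PiM (idx n d) (\<lambda>_. borel)"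

definition obs :: "nat \<Rightarrow> nat \<Rightarrow> (nat \<Rightarrow> nat \<Rightarrow> real) \<Rightarrow> (nat \<Rightarrow> real) \<Rightarrow> (nat \<Rightarrow> nat)
    \<Rightarrow> (bool \<times> nat \<times> nat \<Rightarrow> real) \<Rightarrow> (bool \<times> nat \<times> nat \<Rightarrow> real)" where
  "obs n d \<theta> \<sigma> \<pi>s \<omega> = restrict (\<lambda>(b, i, k).
      if b then \<theta> (\<pi>s i) k + \<sigma> (\<pi>s i) * \<omega> (True, i, k)
      else \<theta> i k + \<sigma> i * \<omega> (False, i, k)) (idx n d)"

definition data_law :: "nat \<Rightarrow> nat \<Rightarrow> (nat \<Rightarrow> nat \<Rightarrow> real) \<Rightarrow> (nat \<Rightarrow> real) \<Rightarrow> (nat \<Rightarrow> nat)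
    \<Rightarrow> (bool \<times> nat \<times> nat \<Rightarrow> real) measure" where
  "data_law n d \<theta> \<sigma> \<pi>s = distr (noise n d) (obs_space n d) (obs n d \<theta> \<sigma> \<pi>s)"

definition sqdist :: "nat \<Rightarrow> (nat \<Rightarrow> real) \<Rightarrow> (nat \<Rightarrow> real) \<Rightarrow> real" where
  "sqdist d x y = (\<Sum>k<d. (x k - y k)^2)"

definition Xobs :: "(bool \<times> nat \<times> nat \<Rightarrow> real) \<Rightarrow> nat \<Rightarrow> nat \<Rightarrow> real" where
  "Xobs y i k = y (False, i, k)"

definition Xsharp :: "(bool \<times> nat \<times> nat \<Rightarrow> real) \<Rightarrow> nat \<Rightarrow> nat \<Rightarrow> real" where
  "Xsharp y i k = y (True, i, k)"

(* LSNS criterion, with sigma^#_i = sigmas i *)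
definition cost_LSNS :: "nat \<Rightarrow> nat \<Rightarrow> (nat \<Rightarrow> real) \<Rightarrow> (nat \<Rightarrow> real)
    \<Rightarrow> (bool \<times> nat \<times> nat \<Rightarrow> real) \<Rightarrow> (nat \<Rightarrow> nat) \<Rightarrow> real" where
  "cost_LSNS n d \<sigma> \<sigma>s y \<pi> =
     (\<Sum>i<n. sqdist d (Xobs y (\<pi> i)) (Xsharp y i) / ((\<sigma> (\<pi> i))^2 + (\<sigma>s i)^2))"

definition cost_LSL :: "nat \<Rightarrow> nat \<Rightarrow> (bool \<times> nat \<times> nat \<Rightarrow> real) \<Rightarrow> (nat \<Rightarrow> nat) \<Rightarrow> real" where
  "cost_LSL n d y \<pi> = (\<Sum>i<n. ln (sqdist d (Xobs y (\<pi> i)) (Xsharp y i)))"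

definition is_argmin_perm :: "nat \<Rightarrow> ((nat \<Rightarrow> nat) \<Rightarrow> real) \<Rightarrow> (nat \<Rightarrow> nat) \<Rightarrow> bool" where
  "is_argmin_perm n c p \<longleftrightarrow> p permutes {..<n} \<and> (\<forall>\<pi>. \<pi> permutes {..<n} \<longrightarrow> c p \<le> c \<pi>)"

definition kappa_bar :: "nat \<Rightarrow> nat \<Rightarrow> (nat \<Rightarrow> nat \<Rightarrow> real) \<Rightarrow> (nat \<Rightarrow> real) \<Rightarrow> real" where
  "kappa_bar n d \<theta> \<sigma> = Min {sqrt (sqdist d (\<theta> i) (\<theta> j)) / sqrt ((\<sigma> i)^2 + (\<sigma> j)^2) | i j.
       i < n \<and> j < n \<and> i \<noteq> j}"

definition delta_H :: "nat \<Rightarrow> (nat \<Rightarrow> nat) \<Rightarrow> (nat \<Rightarrow> nat) \<Rightarrow> real" where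
  "delta_H n \<pi> \<pi>' = real (card {k \<in> {..<n}. \<pi> k \<noteq> \<pi>' k}) / real n"

end

theory Submission
  imports Defs
begin


lemma pairprod:
  fixes N :: "real measure" and I :: "'i set" and K :: "'k set"
    and f :: "'k \<Rightarrow> real \<Rightarrow> real \<Rightarrow> ennreal"
  assumes N: "prob_space N" and fin: "finite K" "finite I"
    and inj: "inj_on p K" "inj_on q K" and sub: "p ` K \<subseteq> I" "q ` K \<subseteq> I"
    and disj: "p ` K \<inter> q ` K = {}"
    and meas: "\<And>k. k \<in> K \<Longrightarrow> case_prod (f k) \<in> borel_measurable (N \<Otimes>\<^sub>M N)"
  shows "(\<integral>\<^sup>+\<omega>. (\<Prod>k\<in>K. f k (\<omega> (p k)) (\<omega> (q k))) \<partial>PiM I (\<lambda>_. N))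
       = (\<Prod>k\<in>K. \<integral>\<^sup>+a. \<integral>\<^sup>+b. f k a b \<partial>N \<partial>N)"
  using fin inj sub disj meas
proof (induction K arbitrary: I rule: finite_induct)
  case empty
  interpret P: prob_space "PiM I (\<lambda>_. N)" by (rule prob_space_PiM) (use N in auto)
  show ?case by (simp add: P.emeasure_space_1)
next
  case (insert k K)
  interpret N: prob_space N by (rule N)
  interpret PS: product_sigma_finite "\<lambda>_. N" by standard
  interpret NN: pair_sigma_finite N N by standard
  define J where "J = {p k, q k}"
  define I' where "I' = I - J"
  have pq: "p k \<noteq> q k" using insert.prems(6) by (metis IntI empty_iff imageI insertI1)
  have IJ: "I' \<inter> J = {}" "finite I'" "finite J" "I' \<union> J = I"
    using insert.prems(4,5) insert.prems(1) by (auto simp: I'_def J_def)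
  have notJ: "p k' \<notin> J" "q k' \<notin> J" if "k' \<in> K" for k'
  proof -
    have kk: "k' \<noteq> k" using that insert.hyps(2) by blast
    have a: "p k' \<noteq> p k" using insert.prems(2) kk that unfolding inj_on_def by blast
    have b: "q k' \<noteq> q k" using insert.prems(3) kk that unfolding inj_on_def by blast
    have c: "p k' \<noteq> q k" "q k' \<noteq> p k" using insert.prems(6) that by blast+
    show "p k' \<notin> J" "q k' \<notin> J" using a b c unfolding J_def by auto
  qed
  have measK: "\<And>k'. k' \<in> K \<Longrightarrow> case_prod (f k') \<in> borel_measurable (N \<Otimes>\<^sub>M N)"
    using insert.prems(7) by auto
  have meask: "case_prod (f k) \<in> borel_measurable (N \<Otimes>\<^sub>M N)"
    using insert.prems(7) by auto
  have mG: "(\<lambda>\<omega>. f k' (\<omega> (p k')) (\<omega> (q k'))) \<in> borel_measurable (PiM I'' (\<lambda>_. N))"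
    if "case_prod (f k') \<in> borel_measurable (N \<Otimes>\<^sub>M N)" "p k' \<in> I''" "q k' \<in> I''" for k' I''
  proof -
    have "(\<lambda>\<omega>. (\<omega> (p k'), \<omega> (q k'))) \<in> measurable (PiM I'' (\<lambda>_. N)) (N \<Otimes>\<^sub>M N)"
      using that by (intro measurable_Pair) auto
    from measurable_comp[OF this that(1)] show ?thesis by (simp add: comp_def)
  qed
  have mprod: "(\<lambda>\<omega>. \<Prod>k\<in>K. f k (\<omega> (p k)) (\<omega> (q k))) \<in> borel_measurable (PiM I'' (\<lambda>_. N))"
    if "p ` K \<subseteq> I''" "q ` K \<subseteq> I''" for I''
    using that by (intro borel_measurable_prod_ennreal mG measK) auto
  have "(\<integral>\<^sup>+\<omega>. (\<Prod>k\<in>insert k K. f k (\<omega> (p k)) (\<omega> (q k))) \<partial>PiM I (\<lambda>_. N))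
     = (\<integral>\<^sup>+\<omega>. f k (\<omega> (p k)) (\<omega> (q k)) * (\<Prod>k\<in>K. f k (\<omega> (p k)) (\<omega> (q k))) \<partial>PiM (I' \<union> J) (\<lambda>_. N))"
    using insert.hyps by (simp add: IJ(4))
  also have "\<dots> = (\<integral>\<^sup>+x. \<integral>\<^sup>+y. f k (y (p k)) (y (q k)) * (\<Prod>k\<in>K. f k (x (p k)) (x (q k))) \<partial>PiM J (\<lambda>_. N) \<partial>PiM I' (\<lambda>_. N))"
  proof (subst PS.product_nn_integral_fold[OF IJ(1-3)])
    show "(\<lambda>\<omega>. f k (\<omega> (p k)) (\<omega> (q k)) * (\<Prod>k\<in>K. f k (\<omega> (p k)) (\<omega> (q k)))) \<in> borel_measurable (PiM (I' \<union> J) (\<lambda>_. N))"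
      using insert.prems(4,5) IJ(4) by (intro borel_measurable_times_ennreal mG mprod meask) auto
    show "(\<integral>\<^sup>+x. \<integral>\<^sup>+y. f k (merge I' J (x, y) (p k)) (merge I' J (x, y) (q k)) * (\<Prod>k\<in>K. f k (merge I' J (x, y) (p k)) (merge I' J (x, y) (q k))) \<partial>PiM J (\<lambda>_. N) \<partial>PiM I' (\<lambda>_. N))
      = (\<integral>\<^sup>+x. \<integral>\<^sup>+y. f k (y (p k)) (y (q k)) * (\<Prod>k\<in>K. f k (x (p k)) (x (q k))) \<partial>PiM J (\<lambda>_. N) \<partial>PiM I' (\<lambda>_. N))"
    proof (intro nn_integral_cong arg_cong2[where f="(*)"] prod.cong refl)
      fix x y k' assume "k' \<in> K"
      then have "p k' \<in> I'" "q k' \<in> I'" using notJ[of k'] insert.prems(4,5) by (auto simp: I'_def)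
      then show "f k' (merge I' J (x, y) (p k')) (merge I' J (x, y) (q k')) = f k' (x (p k')) (x (q k'))"
        by (simp add: merge_def)
    next
      fix x y
      have "p k \<notin> I'" "q k \<notin> I'" "p k \<in> J" "q k \<in> J" by (auto simp: I'_def J_def)
      then show "f k (merge I' J (x, y) (p k)) (merge I' J (x, y) (q k)) = f k (y (p k)) (y (q k))"
        by (simp add: merge_def)
    qed
  qed
  also have "\<dots> = (\<integral>\<^sup>+x. (\<integral>\<^sup>+a. \<integral>\<^sup>+b. f k a b \<partial>N \<partial>N) * (\<Prod>k\<in>K. f k (x (p k)) (x (q k))) \<partial>PiM I' (\<lambda>_. N))"
  proof (intro nn_integral_cong)
    fix x
    have "(\<integral>\<^sup>+y. f k (y (p k)) (y (q k)) * (\<Prod>k\<in>K. f k (x (p k)) (x (q k))) \<partial>PiM J (\<lambda>_. N))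
        = (\<integral>\<^sup>+y. f k (y (p k)) (y (q k)) \<partial>PiM J (\<lambda>_. N)) * (\<Prod>k\<in>K. f k (x (p k)) (x (q k)))"
      by (rule nn_integral_multc) (intro mG meask, auto simp: J_def)
    also have "(\<integral>\<^sup>+y. f k (y (p k)) (y (q k)) \<partial>PiM J (\<lambda>_. N)) = (\<integral>\<^sup>+z. f k (fst z) (snd z) \<partial>(N \<Otimes>\<^sub>M N))"
      unfolding J_def using meask pq by (intro PS.product_nn_integral_pair) auto
    also have "\<dots> = (\<integral>\<^sup>+a. \<integral>\<^sup>+b. f k a b \<partial>N \<partial>N)"
      using N.nn_integral_fst[of "case_prod (f k)" N] meask by (simp add: case_prod_beta')
    finally show "(\<integral>\<^sup>+y. f k (y (p k)) (y (q k)) * (\<Prod>k\<in>K. f k (x (p k)) (x (q k))) \<partial>PiM J (\<lambda>_. N))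
       = (\<integral>\<^sup>+a. \<integral>\<^sup>+b. f k a b \<partial>N \<partial>N) * (\<Prod>k\<in>K. f k (x (p k)) (x (q k)))" .
  qed
  also have "\<dots> = (\<integral>\<^sup>+a. \<integral>\<^sup>+b. f k a b \<partial>N \<partial>N) * (\<integral>\<^sup>+x. (\<Prod>k\<in>K. f k (x (p k)) (x (q k))) \<partial>PiM I' (\<lambda>_. N))"
    using notJ insert.prems(4,5) by (intro nn_integral_cmult mprod) (auto simp: I'_def)
  also have "(\<integral>\<^sup>+x. (\<Prod>k\<in>K. f k (x (p k)) (x (q k))) \<partial>PiM I' (\<lambda>_. N)) = (\<Prod>k\<in>K. \<integral>\<^sup>+a. \<integral>\<^sup>+b. f k a b \<partial>N \<partial>N)"
    using insert.prems notJ IJ(2) by (intro insert.IH) (auto simp: I'_def inj_on_insert)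
  finally show ?case using insert.hyps by simp
qed



abbreviation "NN \<equiv> density lborel std_normal_density"

lemma nn_integral_normal_density: "0 < s \<Longrightarrow> (\<integral>\<^sup>+x. ennreal (normal_density m s x) \<partial>lborel) = 1"
  by (subst nn_integral_eq_integral) (auto intro: integrable_normal_density simp: integral_normal_density)

lemma gauss_pointwise:
  fixes t u c x :: real
  assumes a: "0 < 1 - 2*t*c^2"
  shows "std_normal_density x * exp (t*(u + c*x)^2)
    = exp (t*u^2/(1 - 2*t*c^2)) / sqrt (1 - 2*t*c^2) * normal_density (2*t*u*c/(1 - 2*t*c^2)) (1/sqrt (1 - 2*t*c^2)) x"
proof -
  define a where "a = 1 - 2*t*c^2"
  have ap: "0 < a" using assms by (simp add: a_def)
  have sa: "sqrt a > 0" using ap by simp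
  have sq: "(1/sqrt a)\<^sup>2 = 1/a" using ap by (simp add: power_divide)
  have e1: "a*(x - 2*t*u*c/a)^2 = a*x^2 - 4*t*u*c*x + 4*t^2*u^2*c^2/a"
    using ap by (simp add: field_simps power2_eq_square)
  have e2: "t*u^2/a - 2*t^2*u^2*c^2/a = t*u^2"
  proof -
    have "t*u^2/a - 2*t^2*u^2*c^2/a = t*u^2*(1 - 2*t*c^2)/a" using ap by (simp add: field_simps power2_eq_square)
    also have "\<dots> = t*u^2" using ap by (simp add: a_def)
    finally show ?thesis .
  qed
  have e: "- x\<^sup>2 / 2 + t*(u + c*x)^2 = t*u^2/a + (-(x - 2*t*u*c/a)\<^sup>2 / (2 * (1/sqrt a)\<^sup>2))"
  proof -
    have "-(x - 2*t*u*c/a)\<^sup>2 / (2 * (1/sqrt a)\<^sup>2) = - (a*(x - 2*t*u*c/a)^2) / 2"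
      unfolding sq using ap by (simp add: field_simps)
    also have "\<dots> = -(a*x^2 - 4*t*u*c*x + 4*t^2*u^2*c^2/a)/2" unfolding e1 ..
    finally have "t*u^2/a + (-(x - 2*t*u*c/a)\<^sup>2 / (2 * (1/sqrt a)\<^sup>2)) = (t*u^2/a - 2*t^2*u^2*c^2/a) - a*x^2/2 + 2*t*u*c*x"
      by (simp add: field_simps)
    also have "\<dots> = t*u^2 - a*x^2/2 + 2*t*u*c*x" unfolding e2 ..
    also have "\<dots> = - x\<^sup>2 / 2 + t*(u + c*x)^2" by (simp add: a_def power2_eq_square field_simps)
    finally show ?thesis by simp
  qed
  have s2: "sqrt (2 * pi * (1/sqrt a)\<^sup>2) = sqrt (2*pi) / sqrt a"
    using ap by (simp add: power_divide real_sqrt_divide real_sqrt_mult)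
  have "std_normal_density x * exp (t*(u + c*x)^2) = (1 / sqrt (2 * pi)) * exp (- x\<^sup>2 / 2 + t*(u + c*x)^2)"
    by (simp add: std_normal_density_def mult_exp_exp algebra_simps)
  also have "\<dots> = (1 / sqrt (2 * pi)) * exp (t*u^2/a) * exp (-(x - 2*t*u*c/a)\<^sup>2 / (2 * (1/sqrt a)\<^sup>2))"
    unfolding e by (simp add: mult.assoc mult_exp_exp)
  also have "\<dots> = exp (t*u^2/a) / sqrt a * normal_density (2*t*u*c/a) (1/sqrt a) x"
    unfolding normal_density_def s2 using sa by (simp add: field_simps)
  finally show ?thesis by (simp add: a_def)
qed

lemma gauss1:
  fixes t u c :: real
  assumes a: "0 < 1 - 2*t*c^2"
  shows "(\<integral>\<^sup>+x. ennreal (exp (t*(u + c*x)^2)) \<partial>NN)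
       = ennreal (exp (t*u^2/(1 - 2*t*c^2)) / sqrt (1 - 2*t*c^2))"
proof -
  define K where "K = exp (t*u^2/(1 - 2*t*c^2)) / sqrt (1 - 2*t*c^2)"
  have K: "K \<ge> 0" using a by (simp add: K_def)
  have "(\<integral>\<^sup>+x. ennreal (exp (t*(u + c*x)^2)) \<partial>NN)
      = (\<integral>\<^sup>+x. ennreal (std_normal_density x) * ennreal (exp (t*(u + c*x)^2)) \<partial>lborel)"
    by (subst nn_integral_density) auto
  also have "\<dots> = (\<integral>\<^sup>+x. ennreal K * ennreal (normal_density (2*t*u*c/(1 - 2*t*c^2)) (1/sqrt (1 - 2*t*c^2)) x) \<partial>lborel)"
    using gauss_pointwise[OF a] K
    by (intro nn_integral_cong) (simp add: K_def ennreal_mult'[symmetric])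
  also have "\<dots> = ennreal K"
    using a by (subst nn_integral_cmult) (auto simp: nn_integral_normal_density)
  finally show ?thesis by (simp add: K_def)
qed

lemma gauss2:
  fixes t m c1 c2 :: real
  assumes t: "t < 1/2" and c: "c1^2 + c2^2 = 1"
  shows "(\<integral>\<^sup>+a. \<integral>\<^sup>+b. ennreal (exp (t*(m + c1*a + c2*b)^2)) \<partial>NN \<partial>NN)
       = ennreal (exp (t*m^2/(1 - 2*t)) / sqrt (1 - 2*t))"
proof -
  define a2 where "a2 = 1 - 2*t*c2^2"
  have c2le: "c2^2 \<le> 1" "c1^2 \<le> 1" using c zero_le_power2[of c1] zero_le_power2[of c2] by linarith+
  have a2: "0 < a2"
  proof (cases "t \<ge> 0")
    case True
    then have "t*c2^2 \<le> t" using c2le mult_left_mono[of "c2^2" 1 t] by simp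
    then show ?thesis using t by (simp add: a2_def)
  next
    case False
    then have "t*c2^2 \<le> 0" by (simp add: mult_nonpos_nonneg)
    then show ?thesis by (simp add: a2_def)
  qed
  define t' where "t' = t / a2"
  have a1: "1 - 2*t'*c1^2 = (1 - 2*t)/a2"
  proof -
    have cc: "t*(2*c1^2) + t*(2*c2^2) = t*2" using c by (simp add: algebra_simps flip: distrib_left)
    show ?thesis using a2 cc by (simp add: t'_def a2_def field_simps)
  qed
  have a1p: "0 < 1 - 2*t'*c1^2" using a1 a2 t by simp
  have "(\<integral>\<^sup>+a. \<integral>\<^sup>+b. ennreal (exp (t*(m + c1*a + c2*b)^2)) \<partial>NN \<partial>NN)
      = (\<integral>\<^sup>+a. ennreal (exp (t'*(m + c1*a)^2) / sqrt a2) \<partial>NN)"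
  proof (intro nn_integral_cong)
    fix x
    show "(\<integral>\<^sup>+b. ennreal (exp (t*(m + c1*x + c2*b)^2)) \<partial>NN) = ennreal (exp (t'*(m + c1*x)^2) / sqrt a2)"
      using gauss1[of t c2 "m + c1*x"] a2 by (simp add: a2_def t'_def mult.commute)
  qed
  also have "\<dots> = (\<integral>\<^sup>+a. ennreal (exp (t'*(m + c1*a)^2)) * ennreal (1 / sqrt a2) \<partial>NN)"
    using a2 by (intro nn_integral_cong) (simp add: ennreal_mult'[symmetric])
  also have "\<dots> = (\<integral>\<^sup>+a. ennreal (exp (t'*(m + c1*a)^2)) \<partial>NN) * ennreal (1 / sqrt a2)"
    by (rule nn_integral_multc) auto
  also have "\<dots> = ennreal (exp (t'*m^2/(1 - 2*t'*c1^2)) / sqrt (1 - 2*t'*c1^2)) * ennreal (1 / sqrt a2)"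
    by (subst gauss1[OF a1p]) simp
  also have "\<dots> = ennreal (exp (t'*m^2/(1 - 2*t'*c1^2)) / sqrt (1 - 2*t'*c1^2) * (1 / sqrt a2))"
    using a2 a1p by (simp add: ennreal_mult'[symmetric])
  also have "exp (t'*m^2/(1 - 2*t'*c1^2)) / sqrt (1 - 2*t'*c1^2) * (1 / sqrt a2) = exp (t*m^2/(1 - 2*t)) / sqrt (1 - 2*t)"
  proof -
    have "t'*m^2/(1 - 2*t'*c1^2) = t*m^2/(1 - 2*t)"
      unfolding a1 using a2 t by (simp add: t'_def field_simps)
    moreover have "sqrt (1 - 2*t'*c1^2) * sqrt a2 = sqrt (1 - 2*t)"
      unfolding a1 using a2 t by (simp add: real_sqrt_divide)
    ultimately show ?thesis using a2 by (simp add: field_simps)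
  qed
  finally show ?thesis .
qed



definition Stat :: "nat \<Rightarrow> nat \<Rightarrow> (nat \<Rightarrow> nat \<Rightarrow> real) \<Rightarrow> (nat \<Rightarrow> real) \<Rightarrow> (nat \<Rightarrow> nat) \<Rightarrow> nat \<Rightarrow> nat
   \<Rightarrow> (bool \<times> nat \<times> nat \<Rightarrow> real) \<Rightarrow> real" where
  "Stat n d \<theta> \<sigma> \<pi>s j i \<omega> = sqdist d (Xobs (obs n d \<theta> \<sigma> \<pi>s \<omega>) j) (Xsharp (obs n d \<theta> \<sigma> \<pi>s \<omega>) i)
       / ((\<sigma> j)^2 + (\<sigma> (\<pi>s i))^2)"

definition Mdist :: "nat \<Rightarrow> (nat \<Rightarrow> nat \<Rightarrow> real) \<Rightarrow> (nat \<Rightarrow> real) \<Rightarrow> (nat \<Rightarrow> nat) \<Rightarrow> nat \<Rightarrow> nat \<Rightarrow> real" where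
  "Mdist d \<theta> \<sigma> \<pi>s j i = sqdist d (\<theta> j) (\<theta> (\<pi>s i)) / ((\<sigma> j)^2 + (\<sigma> (\<pi>s i))^2)"

lemma stat_expand:
  assumes "i < n" "j < n" "\<sigma> j > 0" "\<sigma> (\<pi>s i) > 0"
  defines "S \<equiv> sqrt ((\<sigma> j)^2 + (\<sigma> (\<pi>s i))^2)"
  shows "Stat n d \<theta> \<sigma> \<pi>s j i \<omega> = (\<Sum>k<d. ((\<theta> j k - \<theta> (\<pi>s i) k)/S + (\<sigma> j / S) * \<omega> (False, j, k)
            + (- \<sigma> (\<pi>s i) / S) * \<omega> (True, i, k))^2)"
    and "Mdist d \<theta> \<sigma> \<pi>s j i = (\<Sum>k<d. ((\<theta> j k - \<theta> (\<pi>s i) k)/S)^2)"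
    and "(\<sigma> j / S)^2 + (- \<sigma> (\<pi>s i) / S)^2 = 1"
proof -
  have Sp: "S > 0" using assms by (simp add: S_def add_pos_pos)
  have S2: "S^2 = (\<sigma> j)^2 + (\<sigma> (\<pi>s i))^2" using assms by (simp add: S_def add_pos_pos)
  have ob: "obs n d \<theta> \<sigma> \<pi>s \<omega> (False, j, k) = \<theta> j k + \<sigma> j * \<omega> (False, j, k)"
    "obs n d \<theta> \<sigma> \<pi>s \<omega> (True, i, k) = \<theta> (\<pi>s i) k + \<sigma> (\<pi>s i) * \<omega> (True, i, k)" if "k < d" for k
    using assms that by (auto simp: obs_def idx_def)
  show "Stat n d \<theta> \<sigma> \<pi>s j i \<omega> = (\<Sum>k<d. ((\<theta> j k - \<theta> (\<pi>s i) k)/S + (\<sigma> j / S) * \<omega> (False, j, k)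
            + (- \<sigma> (\<pi>s i) / S) * \<omega> (True, i, k))^2)"
    unfolding Stat_def sqdist_def Xobs_def Xsharp_def S2[symmetric] sum_divide_distrib
  proof (intro sum.cong refl)
    fix k assume "k \<in> {..<d}"
    then have kd: "k < d" by simp
    have e: "(\<theta> j k - \<theta> (\<pi>s i) k) / S + \<sigma> j / S * \<omega> (False, j, k) + - \<sigma> (\<pi>s i) / S * \<omega> (True, i, k)
        = (obs n d \<theta> \<sigma> \<pi>s \<omega> (False, j, k) - obs n d \<theta> \<sigma> \<pi>s \<omega> (True, i, k)) / S"
      using Sp kd by (simp add: ob field_simps)
    show "(obs n d \<theta> \<sigma> \<pi>s \<omega> (False, j, k) - obs n d \<theta> \<sigma> \<pi>s \<omega> (True, i, k))\<^sup>2 / S\<^sup>2 =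
         ((\<theta> j k - \<theta> (\<pi>s i) k) / S + \<sigma> j / S * \<omega> (False, j, k) + - \<sigma> (\<pi>s i) / S * \<omega> (True, i, k))\<^sup>2"
      unfolding e by (simp add: power_divide)
  qed
  show "Mdist d \<theta> \<sigma> \<pi>s j i = (\<Sum>k<d. ((\<theta> j k - \<theta> (\<pi>s i) k)/S)^2)"
    unfolding Mdist_def sqdist_def S2[symmetric] sum_divide_distrib by (simp add: power_divide)
  have "(\<sigma> j / S)^2 + (- \<sigma> (\<pi>s i) / S)^2 = ((\<sigma> j)^2 + (\<sigma> (\<pi>s i))^2) / S^2"
    by (simp add: power_divide add_divide_distrib)
  also have "\<dots> = 1" using S2 Sp assms(3) by simp
  finally show "(\<sigma> j / S)^2 + (- \<sigma> (\<pi>s i) / S)^2 = 1" .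
qed

lemma prob_NN: "prob_space NN" by (rule prob_space_normal_density, simp)

lemma mgf:
  assumes "i < n" "j < n" "\<sigma> j > 0" "\<sigma> (\<pi>s i) > 0" "t < 1/2"
  shows "(\<integral>\<^sup>+\<omega>. ennreal (exp (t * Stat n d \<theta> \<sigma> \<pi>s j i \<omega>)) \<partial>noise n d)
     = ennreal (exp (t * Mdist d \<theta> \<sigma> \<pi>s j i / (1 - 2*t)) / sqrt (1 - 2*t) ^ d)"
proof -
  define S where "S = sqrt ((\<sigma> j)^2 + (\<sigma> (\<pi>s i))^2)"
  define m where "m k = (\<theta> j k - \<theta> (\<pi>s i) k)/S" for k
  define c1 where "c1 = \<sigma> j / S"
  define c2 where "c2 = - \<sigma> (\<pi>s i) / S"
  note ex12 = stat_expand(1,2)[where i=i and n=n and j=j and \<sigma>=\<sigma> and \<pi>s=\<pi>s and d=d and \<theta>=\<theta>, OF assms(1-4), folded S_def m_def c1_def c2_def]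
  note ex3 = stat_expand(3)[where i=i and n=n and j=j and \<sigma>=\<sigma> and \<pi>s=\<pi>s, OF assms(1-4), folded S_def m_def c1_def c2_def]
  note ex = ex12 ex3
  have c: "c1^2 + c2^2 = 1" using ex(3) by (simp add: c1_def c2_def)
  have "(\<integral>\<^sup>+\<omega>. ennreal (exp (t * Stat n d \<theta> \<sigma> \<pi>s j i \<omega>)) \<partial>noise n d)
      = (\<integral>\<^sup>+\<omega>. (\<Prod>k\<in>{..<d}. (\<lambda>k a b. ennreal (exp (t*(m k + c1*a + c2*b)^2))) k (\<omega> (False, j, k)) (\<omega> (True, i, k))) \<partial>PiM (idx n d) (\<lambda>_. NN))"
    unfolding noise_def
  proof (intro nn_integral_cong)
    fix \<omega> :: "bool \<times> nat \<times> nat \<Rightarrow> real"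
    have "exp (t * Stat n d \<theta> \<sigma> \<pi>s j i \<omega>) = (\<Prod>k<d. exp (t*(m k + c1*\<omega> (False, j, k) + c2*\<omega> (True, i, k))^2))"
      unfolding ex(1) sum_distrib_left by (simp add: exp_sum c1_def c2_def)
    then show "ennreal (exp (t * Stat n d \<theta> \<sigma> \<pi>s j i \<omega>)) = (\<Prod>k\<in>{..<d}. (\<lambda>k a b. ennreal (exp (t*(m k + c1*a + c2*b)^2))) k (\<omega> (False, j, k)) (\<omega> (True, i, k)))"
      by (simp add: prod_ennreal)
  qed
  also have "\<dots> = (\<Prod>k\<in>{..<d}. \<integral>\<^sup>+a. \<integral>\<^sup>+b. ennreal (exp (t*(m k + c1*a + c2*b)^2)) \<partial>NN \<partial>NN)"
  proof (rule pairprod[OF prob_NN])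
    show "inj_on (\<lambda>k. (False, j, k)) {..<d}" "inj_on (\<lambda>k. (True, i, k)) {..<d}" by (auto simp: inj_on_def)
    show "(\<lambda>k. (False, j, k)) ` {..<d} \<subseteq> idx n d" "(\<lambda>k. (True, i, k)) ` {..<d} \<subseteq> idx n d"
      using assms by (auto simp: idx_def)
    show "(\<lambda>k. (False, j, k)) ` {..<d} \<inter> (\<lambda>k. (True, i, k)) ` {..<d} = {}" by auto
    show "finite {..<d}" by simp
    show "finite (idx n d)" by (simp add: idx_def)
    fix k
    show "(\<lambda>(a, b). ennreal (exp (t*(m k + c1*a + c2*b)^2))) \<in> borel_measurable (NN \<Otimes>\<^sub>M NN)"
      by measurable
  qed
  also have "\<dots> = (\<Prod>k\<in>{..<d}. ennreal (exp (t*(m k)^2/(1 - 2*t)) / sqrt (1 - 2*t)))"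
    by (intro prod.cong refl gauss2 assms c)
  also have "\<dots> = ennreal (\<Prod>k\<in>{..<d}. exp (t*(m k)^2/(1 - 2*t)) / sqrt (1 - 2*t))"
    using assms by (intro prod_ennreal) simp
  also have "(\<Prod>k\<in>{..<d}. exp (t*(m k)^2/(1 - 2*t)) / sqrt (1 - 2*t)) = exp (t * Mdist d \<theta> \<sigma> \<pi>s j i / (1 - 2*t)) / sqrt (1 - 2*t) ^ d"
    unfolding ex(2) prod_dividef by (simp add: exp_sum[symmetric] sum_divide_distrib sum_distrib_left)
  finally show ?thesis .
qed



lemma sqrt_pow_exp: "0 < x \<Longrightarrow> sqrt x ^ d = exp (real d / 2 * ln x)"
proof -
  assume x: "0 < x"
  have l: "ln (sqrt x) = ln x / 2" using x by (simp add: ln_sqrt)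
  have "sqrt x = exp (ln (sqrt x))" using x by simp
  then have "sqrt x = exp (ln x / 2)" unfolding l .
  then have "sqrt x ^ d = exp (ln x / 2) ^ d" by simp
  also have "\<dots> = exp (real d * (ln x / 2))" by (rule exp_of_nat_mult[symmetric])
  finally show ?thesis by simp
qed

lemma diag_bound:
  fixes d :: nat and L sv :: real
  assumes d: "d \<ge> 1" and L: "L > 0" and s1: "sv \<ge> 8*L" and s2: "sv^2 \<ge> 16*real d*L"
  shows "\<exists>lam. 0 \<le> lam \<and> lam < 1/2 \<and> exp (-lam*(real d + sv)) / sqrt (1 - 2*lam) ^ d \<le> exp (-L)"
proof -
  define D where "D = real d"
  have D: "D \<ge> 1" using d by (simp add: D_def)
  define lam where "lam = min (1/4) (sv/(8*D))"
  have sp: "sv > 0" using s1 L by linarith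
  have l0: "0 \<le> lam" "lam \<le> 1/4" using sp D by (auto simp: lam_def)
  have lnb: "ln (1 - 2*lam) \<ge> -(2*lam) - 2*(2*lam)^2"
    using ln_one_minus_pos_lower_bound[of "2*lam"] l0 by simp
  have key: "-lam* sv + 4*D*lam^2 \<le> -L"
  proof (cases "sv \<le> 2*D")
    case True
    then have lv: "lam = sv/(8*D)" using D by (simp add: lam_def field_simps)
    have "-lam* sv + 4*D*lam^2 = - (sv^2/(16*D))" unfolding lv using D by (simp add: field_simps power2_eq_square)
    also have "\<dots> \<le> -L" using s2 D by (simp add: D_def field_simps)
    finally show ?thesis .
  next
    case False
    then have lv: "lam = 1/4" using D by (simp add: lam_def field_simps)
    show ?thesis unfolding lv using False s1 by (simp add: power2_eq_square)
  qed
  have "exp (-lam*(D + sv)) / sqrt (1 - 2*lam) ^ d = exp (-lam*(D + sv) - D/2 * ln (1 - 2*lam))"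
    using l0 by (simp add: sqrt_pow_exp exp_diff D_def)
  also have "\<dots> \<le> exp (-L)"
  proof -
    have "-lam*(D + sv) - D/2 * ln (1 - 2*lam) \<le> -lam*(D + sv) - D/2 * (-(2*lam) - 2*(2*lam)^2)"
      using lnb D by (intro diff_left_mono mult_left_mono) auto
    also have "\<dots> = -lam* sv + 4*D*lam^2" by (simp add: algebra_simps power2_eq_square)
    finally show ?thesis using key by simp
  qed
  finally show ?thesis using l0 by (intro exI[of _ lam]) (simp add: D_def)
qed

lemma cross_bound:
  fixes d :: nat and L k2 M :: real
  assumes d: "d \<ge> 1" and L: "L > 0" and k1: "k2 \<ge> 32*L" and k2: "k2^2 \<ge> 256*real d*L"
    and M: "M \<ge> k2"
  shows "\<exists>u. 0 \<le> u \<and> exp (u*(real d + k2/4)) * exp (- u * M / (1 + 2*u)) / sqrt (1 + 2*u) ^ d \<le> exp (-L)"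
proof -
  define D where "D = real d"
  have D: "D \<ge> 1" using d by (simp add: D_def)
  define sv where "sv = k2/4"
  define r where "r = M - sv"
  have kp: "k2 > 0" using k1 L by linarith
  have sp: "sv > 0" using kp by (simp add: sv_def)
  have r3: "r \<ge> 3* sv" using M by (simp add: r_def sv_def)
  have rp: "r > 0" using r3 sp by linarith
  have Mr: "M \<le> 4*r/3" using r3 by (simp add: r_def)
  have Mp: "M > 0" using M kp by linarith
  define u where "u = r/(4*(D + M))"
  have up: "0 \<le> u" using rp Mp D by (simp add: u_def)
  have u4: "u \<le> 1/4"
  proof -
    have "r \<le> D + M" using r_def sp D by simp
    then show ?thesis using Mp D rp by (simp add: u_def field_simps)
  qed
  have lnb: "ln (1 + 2*u) \<ge> 2*u - (2*u)^2"
    using ln_one_plus_pos_lower_bound[of "2*u"] up u4 by simp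
  have inv: "- u * M / (1 + 2*u) \<le> - u*M + 2*u^2*M"
  proof -
    have "u*M*(1 - 2*u) \<le> u*M/(1 + 2*u)"
    proof -
      have "(1 - 2*u)*(1 + 2*u) \<le> 1" by (simp add: algebra_simps)
      then have "1 - 2*u \<le> 1/(1 + 2*u)" using up by (simp add: field_simps)
      then show ?thesis using up Mp mult_left_mono[of "1 - 2*u" "1/(1+2*u)" "u*M"] by simp
    qed
    then show ?thesis by (simp add: algebra_simps power2_eq_square)
  qed
  have key: "r^2 \<ge> 8*L*(D + M)"
  proof -
    have a: "8*L*M \<le> k2*M/4" using k1 Mp by (simp add: field_simps)
    have b: "k2*M/4 \<le> 4*r^2/9"
    proof -
      have "k2 \<le> 4*r/3" using r3 by (simp add: sv_def)
      then have "k2*M \<le> (4*r/3)*(4*r/3)" using Mr kp Mp by (intro mult_mono) auto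
      then show ?thesis by (simp add: power2_eq_square field_simps)
    qed
    have c: "8*L*D \<le> r^2/18"
    proof -
      have "8*L*D*256 \<le> 8*k2^2" using k2 by (simp add: D_def mult.commute mult.left_commute)
      moreover have "k2^2 \<le> (4*r/3)^2" using r3 kp by (intro power_mono) (auto simp: sv_def)
      ultimately show ?thesis by (simp add: power2_eq_square field_simps)
    qed
    have e: "8*L*(D + M) = 8*L*D + 8*L*M" by (simp add: algebra_simps)
    show ?thesis unfolding e using a b c zero_le_power2[of r] by linarith
  qed
  have sq: "sqrt (1 + 2*u) ^ d = exp (D/2 * ln (1 + 2*u))" using up by (simp add: sqrt_pow_exp D_def)
  have "exp (u*(D + sv)) * exp (- u * M / (1 + 2*u)) / sqrt (1 + 2*u) ^ d
      = exp (u*(D + sv) + (- u * M / (1 + 2*u)) - D/2 * ln (1 + 2*u))"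
    unfolding sq by (simp only: exp_diff exp_add)
  also have "\<dots> \<le> exp (-L)"
  proof -
    have "u*(D + sv) + (- u * M / (1 + 2*u)) - D/2 * ln (1 + 2*u) \<le> u*(D + sv) + (- u*M + 2*u^2*M) - D/2 * (2*u - (2*u)^2)"
      using inv lnb D by (intro add_mono diff_mono mult_left_mono order.refl) auto
    also have "\<dots> = - u*r + u^2*(2*D + 2*M)" by (simp add: r_def algebra_simps power2_eq_square)
    also have "\<dots> = - (r^2/(8*(D + M)))"
    proof -
      define Q where "Q = D + M"
      have Qp: "0 < Q" using Mp D by (simp add: Q_def)
      have uQ: "u = r/(4*Q)" by (simp add: u_def Q_def)
      have "2*D + 2*M = 2*Q" by (simp add: Q_def)
      then have "- u*r + u^2*(2*D + 2*M) = - (r/(4*Q))*r + (r/(4*Q))^2*(2*Q)" by (simp add: uQ)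
      also have "\<dots> = - (r^2/(8*Q))" using Qp by (simp add: field_simps power2_eq_square)
      finally show ?thesis by (simp add: Q_def)
    qed
    also have "\<dots> \<le> -L" using key Mp D by (simp add: field_simps)
    finally show ?thesis by simp
  qed
  finally show ?thesis using up by (intro exI[of _ u]) (simp add: D_def sv_def)
qed

lemma zero_bound:
  fixes d :: nat and L :: real
  assumes d: "d \<ge> 1" and L: "L > 0"
  shows "\<exists>u. 0 \<le> u \<and> 1 / sqrt (1 + 2*u) ^ d \<le> exp (-L)"
proof -
  define u where "u = (exp (2*L) - 1)/2"
  have up: "0 \<le> u" using L by (simp add: u_def)
  have e2: "1 + 2*u = (exp L)^2" using exp_of_nat_mult[of 2 L] by (simp add: u_def field_simps)
  have "sqrt (1 + 2*u) = exp L" unfolding e2 by simp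
  moreover have "exp L ^ 1 \<le> exp L ^ d" using d L by (intro power_increasing) auto
  ultimately have "sqrt (1 + 2*u) ^ d \<ge> exp L" by simp
  then show ?thesis using up by (intro exI[of _ u]) (simp add: exp_minus field_simps)
qed



lemma prob_noise: "prob_space (noise n d)"
  unfolding noise_def by (rule prob_space_PiM) (rule prob_NN)

lemma comp_meas:
  assumes "x \<in> idx n d"
  shows "(\<lambda>\<omega>. \<omega> x) \<in> borel_measurable (noise n d)"
proof -
  have "(\<lambda>\<omega>. \<omega> x) \<in> measurable (noise n d) NN"
    unfolding noise_def using assms by (rule measurable_component_singleton)
  then show ?thesis by (simp add: measurable_def)
qed

lemma stat_meas:
  assumes "i < n" "j < n" "\<sigma> j > 0" "\<sigma> (\<pi>s i) > 0"
  shows "(\<lambda>\<omega>. Stat n d \<theta> \<sigma> \<pi>s j i \<omega>) \<in> borel_measurable (noise n d)"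
proof -
  define S where "S = sqrt ((\<sigma> j)^2 + (\<sigma> (\<pi>s i))^2)"
  have e: "(\<lambda>\<omega>. Stat n d \<theta> \<sigma> \<pi>s j i \<omega>) = (\<lambda>\<omega>. \<Sum>k<d. ((\<theta> j k - \<theta> (\<pi>s i) k)/S + (\<sigma> j / S) * \<omega> (False, j, k)
            + (- \<sigma> (\<pi>s i) / S) * \<omega> (True, i, k))^2)"
    using stat_expand(1)[where i=i and n=n and j=j and \<sigma>=\<sigma> and \<pi>s=\<pi>s and d=d and \<theta>=\<theta>, OF assms] by (simp add: S_def)
  show ?thesis unfolding e
  proof (intro borel_measurable_sum borel_measurable_power borel_measurable_add borel_measurable_times borel_measurable_const)
    fix k assume "k \<in> {..<d}"
    then show "(\<lambda>\<omega>. \<omega> (False, j, k)) \<in> borel_measurable (noise n d)" "(\<lambda>\<omega>. \<omega> (True, i, k)) \<in> borel_measurable (noise n d)"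
      using assms by (auto intro!: comp_meas simp: idx_def)
  qed
qed

lemma markov_exp:
  assumes g: "g \<in> borel_measurable M"
  shows "emeasure M {\<omega>\<in>space M. 0 \<le> g \<omega>} \<le> (\<integral>\<^sup>+\<omega>. ennreal (exp (g \<omega>)) \<partial>M)"
proof -
  have s: "{\<omega>\<in>space M. 0 \<le> g \<omega>} \<in> sets M" using g by measurable
  have "emeasure M {\<omega>\<in>space M. 0 \<le> g \<omega>} = (\<integral>\<^sup>+\<omega>. indicator {\<omega>\<in>space M. 0 \<le> g \<omega>} \<omega> \<partial>M)"
    using s by simp
  also have "\<dots> \<le> (\<integral>\<^sup>+\<omega>. ennreal (exp (g \<omega>)) \<partial>M)"
    by (intro nn_integral_mono) (auto simp: indicator_def)
  finally show ?thesis .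
qed

lemma tail_up:
  assumes "i < n" "j < n" "\<sigma> j > 0" "\<sigma> (\<pi>s i) > 0" "0 \<le> t" "t < 1/2"
  shows "measure (noise n d) {\<omega>\<in>space (noise n d). T \<le> Stat n d \<theta> \<sigma> \<pi>s j i \<omega>}
     \<le> exp (-t*T) * (exp (t * Mdist d \<theta> \<sigma> \<pi>s j i / (1 - 2*t)) / sqrt (1 - 2*t) ^ d)"
proof -
  interpret P: prob_space "noise n d" by (rule prob_noise)
  note sm = stat_meas[where i=i and n=n and j=j and \<sigma>=\<sigma> and \<pi>s=\<pi>s and d=d and \<theta>=\<theta>, OF assms(1-4)]
  have sub: "{\<omega>\<in>space (noise n d). T \<le> Stat n d \<theta> \<sigma> \<pi>s j i \<omega>} \<subseteq> {\<omega>\<in>space (noise n d). 0 \<le> t*(Stat n d \<theta> \<sigma> \<pi>s j i \<omega> - T)}"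
    using assms(5) by auto
  have "emeasure (noise n d) {\<omega>\<in>space (noise n d). T \<le> Stat n d \<theta> \<sigma> \<pi>s j i \<omega>}
      \<le> emeasure (noise n d) {\<omega>\<in>space (noise n d). 0 \<le> t*(Stat n d \<theta> \<sigma> \<pi>s j i \<omega> - T)}"
    using sub sm by (intro emeasure_mono) measurable
  also have "\<dots> \<le> (\<integral>\<^sup>+\<omega>. ennreal (exp (t*(Stat n d \<theta> \<sigma> \<pi>s j i \<omega> - T))) \<partial>noise n d)"
    using sm by (intro markov_exp borel_measurable_times borel_measurable_diff borel_measurable_const)
  also have "\<dots> = (\<integral>\<^sup>+\<omega>. ennreal (exp (-t*T)) * ennreal (exp (t * Stat n d \<theta> \<sigma> \<pi>s j i \<omega>)) \<partial>noise n d)"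
    by (intro nn_integral_cong) (simp add: ennreal_mult'[symmetric] mult_exp_exp algebra_simps)
  also have "\<dots> = ennreal (exp (-t*T)) * (\<integral>\<^sup>+\<omega>. ennreal (exp (t * Stat n d \<theta> \<sigma> \<pi>s j i \<omega>)) \<partial>noise n d)"
    using sm by (intro nn_integral_cmult) measurable
  also have "\<dots> = ennreal (exp (-t*T) * (exp (t * Mdist d \<theta> \<sigma> \<pi>s j i / (1 - 2*t)) / sqrt (1 - 2*t) ^ d))"
    using assms by (simp add: mgf ennreal_mult'[symmetric])
  moreover have "0 \<le> exp (-t*T) * (exp (t * Mdist d \<theta> \<sigma> \<pi>s j i / (1 - 2*t)) / sqrt (1 - 2*t) ^ d)"
    using assms(6) by simp
  ultimately show ?thesis
    by (simp add: P.emeasure_eq_measure)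
qed

lemma tail_low:
  assumes "i < n" "j < n" "\<sigma> j > 0" "\<sigma> (\<pi>s i) > 0" "0 \<le> u"
  shows "measure (noise n d) {\<omega>\<in>space (noise n d). Stat n d \<theta> \<sigma> \<pi>s j i \<omega> \<le> T}
     \<le> exp (u*T) * (exp (- u * Mdist d \<theta> \<sigma> \<pi>s j i / (1 + 2*u)) / sqrt (1 + 2*u) ^ d)"
proof -
  interpret P: prob_space "noise n d" by (rule prob_noise)
  note sm = stat_meas[where i=i and n=n and j=j and \<sigma>=\<sigma> and \<pi>s=\<pi>s and d=d and \<theta>=\<theta>, OF assms(1-4)]
  have sub: "{\<omega>\<in>space (noise n d). Stat n d \<theta> \<sigma> \<pi>s j i \<omega> \<le> T} \<subseteq> {\<omega>\<in>space (noise n d). 0 \<le> u*(T - Stat n d \<theta> \<sigma> \<pi>s j i \<omega>)}"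
    using assms(5) by auto
  have "emeasure (noise n d) {\<omega>\<in>space (noise n d). Stat n d \<theta> \<sigma> \<pi>s j i \<omega> \<le> T}
      \<le> emeasure (noise n d) {\<omega>\<in>space (noise n d). 0 \<le> u*(T - Stat n d \<theta> \<sigma> \<pi>s j i \<omega>)}"
    using sub sm by (intro emeasure_mono) measurable
  also have "\<dots> \<le> (\<integral>\<^sup>+\<omega>. ennreal (exp (u*(T - Stat n d \<theta> \<sigma> \<pi>s j i \<omega>))) \<partial>noise n d)"
    using sm by (intro markov_exp borel_measurable_times borel_measurable_diff borel_measurable_const)
  also have "\<dots> = (\<integral>\<^sup>+\<omega>. ennreal (exp (u*T)) * ennreal (exp ((-u) * Stat n d \<theta> \<sigma> \<pi>s j i \<omega>)) \<partial>noise n d)"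
    by (intro nn_integral_cong) (simp add: ennreal_mult'[symmetric] mult_exp_exp algebra_simps)
  also have "\<dots> = ennreal (exp (u*T)) * (\<integral>\<^sup>+\<omega>. ennreal (exp ((-u) * Stat n d \<theta> \<sigma> \<pi>s j i \<omega>)) \<partial>noise n d)"
    using sm by (intro nn_integral_cmult) measurable
  also have "\<dots> = ennreal (exp (u*T) * (exp (- u * Mdist d \<theta> \<sigma> \<pi>s j i / (1 + 2*u)) / sqrt (1 + 2*u) ^ d))"
    using assms mgf[where i=i and n=n and j=j and \<sigma>=\<sigma> and \<pi>s=\<pi>s and d=d and \<theta>=\<theta> and t="-u", OF assms(1-4)] by (simp add: ennreal_mult'[symmetric])
  moreover have "0 \<le> exp (u*T) * (exp (- u * Mdist d \<theta> \<sigma> \<pi>s j i / (1 + 2*u)) / sqrt (1 + 2*u) ^ d)"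
    using assms(5) by simp
  ultimately show ?thesis
    by (simp add: P.emeasure_eq_measure ennreal_le_iff)
qed



lemma perm_diff_exists:
  assumes "p permutes {..<n}" "q permutes {..<n}" "q \<noteq> p"
  shows "\<exists>i<n. q i \<noteq> p i"
proof (rule ccontr)
  assume "\<not> (\<exists>i<n. q i \<noteq> p i)"
  then have "q x = p x" for x
    using assms(1,2) by (cases "x < n") (auto simp: permutes_not_in)
  then show False using assms(3) by auto
qed

lemma LSNS_good:
  fixes c :: "nat \<Rightarrow> nat \<Rightarrow> real"
  assumes p: "p permutes {..<n}" and q: "q permutes {..<n}" and qp: "q \<noteq> p"
    and diag: "\<And>i. i < n \<Longrightarrow> c (p i) i < T"
    and cross: "\<And>i j. i < n \<Longrightarrow> j < n \<Longrightarrow> j \<noteq> p i \<Longrightarrow> T < c j i"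
  shows "(\<Sum>i<n. c (p i) i) < (\<Sum>i<n. c (q i) i)"
proof (rule sum_strict_mono_ex1)
  show "finite {..<n}" by simp
  show "\<forall>i\<in>{..<n}. c (p i) i \<le> c (q i) i"
  proof
    fix i assume i: "i \<in> {..<n}"
    then have qi: "q i < n" using permutes_in_image[OF q] by auto
    show "c (p i) i \<le> c (q i) i"
      using diag[of i] cross[of i "q i"] i qi by (cases "q i = p i") auto
  qed
  obtain i where i: "i < n" "q i \<noteq> p i" using perm_diff_exists[OF p q qp] by blast
  then have qi: "q i < n" using permutes_in_image[OF q] by auto
  show "\<exists>i\<in>{..<n}. c (p i) i < c (q i) i"
    using diag[of i] cross[of i "q i"] i qi by force
qed

lemma ln_mult_pos: "0 < (x::real) \<Longrightarrow> 0 < y \<Longrightarrow> ln (x*y) = ln x + ln y"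
  by (simp add: ln_mult)

lemma ln_sum_sq: "0 < (a::real) \<Longrightarrow> 0 < b \<Longrightarrow> ln 2 + ln a + ln b \<le> ln (a^2 + b^2)"
proof -
  assume a: "0 < a" and b: "0 < b"
  have "2*a*b \<le> a^2 + b^2" using sum_squares_bound[of a b] by simp
  moreover have "ln 2 + ln a + ln b = ln (2*a*b)" using a b by (simp add: ln_mult)
  moreover have "0 < 2*a*b" "0 < a^2 + b^2" using a b by (simp_all add: add_pos_pos)
  ultimately show ?thesis by simp
qed

lemma LSL_good:
  fixes c :: "nat \<Rightarrow> nat \<Rightarrow> real"
  assumes p: "p permutes {..<n}" and q: "q permutes {..<n}" and qp: "q \<noteq> p"
    and diag: "\<And>i. i < n \<Longrightarrow> c (p i) i < T" "\<And>i. i < n \<Longrightarrow> 0 < c (p i) i"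
    and cross: "\<And>i j. i < n \<Longrightarrow> j < n \<Longrightarrow> j \<noteq> p i \<Longrightarrow> T < c j i"
    and sig: "\<And>i. i < n \<Longrightarrow> 0 < \<sigma> i" and Tp: "0 < T"
  shows "(\<Sum>i<n. ln (c (p i) i * ((\<sigma> (p i))^2 + (\<sigma> (p i))^2))) < (\<Sum>i<n. ln (c (q i) i * ((\<sigma> (q i))^2 + (\<sigma> (p i))^2)))"
proof -
  have pn: "p i < n" "q i < n" if "i < n" for i
    using permutes_in_image[OF p] permutes_in_image[OF q] that by auto
  have cpos: "0 < c (q i) i" if "i < n" for i
    using diag(2)[OF that] cross[OF that pn(2)[OF that]] Tp by (cases "q i = p i") auto
  have split: "(\<Sum>i<n. ln (c (r i) i * ((\<sigma> (r i))^2 + (\<sigma> (p i))^2)))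
      = (\<Sum>i<n. ln (c (r i) i)) + (\<Sum>i<n. ln ((\<sigma> (r i))^2 + (\<sigma> (p i))^2))"
    if "\<And>i. i < n \<Longrightarrow> 0 < c (r i) i" "\<And>i. i < n \<Longrightarrow> r i < n" for r
    unfolding sum.distrib[symmetric]
  proof (intro sum.cong refl)
    fix i assume "i \<in> {..<n}"
    then have i: "i < n" by simp
    have pos: "0 < (\<sigma> (r i))^2 + (\<sigma> (p i))^2" using sig[OF that(2)[OF i]] by (simp add: add_pos_nonneg)
    show "ln (c (r i) i * ((\<sigma> (r i))^2 + (\<sigma> (p i))^2)) = ln (c (r i) i) + ln ((\<sigma> (r i))^2 + (\<sigma> (p i))^2)"
      by (rule ln_mult_pos[OF that(1)[OF i] pos])
  qed
  have A: "(\<Sum>i<n. ln (c (p i) i)) < (\<Sum>i<n. ln (c (q i) i))"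
  proof (rule LSNS_good[OF p q qp, where c="\<lambda>j i. ln (c j i)" and T="ln T"])
    fix i assume i: "i < n"
    show "ln (c (p i) i) < ln T" using diag(1)[OF i] diag(2)[OF i] by simp
  next
    fix i j assume i: "i < n" and j: "j < n" "j \<noteq> p i"
    have "T < c j i" using cross[OF i j] .
    then show "ln T < ln (c j i)" using Tp by simp
  qed
  have sp: "(\<Sum>i<n. ln (\<sigma> (r i))) = (\<Sum>i<n. ln (\<sigma> i))" if "r permutes {..<n}" for r
    using sum.permute[OF that, of "\<lambda>i. ln (\<sigma> i)"] by (simp add: comp_def)
  have "(\<Sum>i<n. ln ((\<sigma> (p i))^2 + (\<sigma> (p i))^2)) = (\<Sum>i<n. ln 2 + ln (\<sigma> (p i)) + ln (\<sigma> (p i)))"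
  proof (intro sum.cong refl)
    fix i assume "i \<in> {..<n}"
    then have s: "0 < \<sigma> (p i)" using sig pn by auto
    have "(\<sigma> (p i))^2 + (\<sigma> (p i))^2 = 2 * \<sigma> (p i) * \<sigma> (p i)" by (simp add: power2_eq_square)
    then show "ln ((\<sigma> (p i))^2 + (\<sigma> (p i))^2) = ln 2 + ln (\<sigma> (p i)) + ln (\<sigma> (p i))"
      using s by (simp add: ln_mult)
  qed
  also have "\<dots> = (\<Sum>i<n. ln 2 + ln (\<sigma> (q i)) + ln (\<sigma> (p i)))"
    using sp[OF p] sp[OF q] by (simp add: sum.distrib flip: sum_distrib_left)
  also have "\<dots> \<le> (\<Sum>i<n. ln ((\<sigma> (q i))^2 + (\<sigma> (p i))^2))"
    using sig pn by (intro sum_mono ln_sum_sq) auto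
  finally have B: "(\<Sum>i<n. ln ((\<sigma> (p i))^2 + (\<sigma> (p i))^2)) \<le> (\<Sum>i<n. ln ((\<sigma> (q i))^2 + (\<sigma> (p i))^2))" .
  show ?thesis
    using split[of p] split[of q] A B diag(2) cpos pn by simp
qed



lemma obs_meas:
  assumes "\<pi>s permutes {..<n}"
  shows "obs n d \<theta> \<sigma> \<pi>s \<in> measurable (noise n d) (obs_space n d)"
  unfolding obs_def obs_space_def
proof (rule measurable_restrict)
  fix x assume x: "x \<in> idx n d"
  obtain b i k where xe: "x = (b, i, k)" by (cases x) auto
  have ik: "i < n" "k < d" using x xe by (auto simp: idx_def)
  have pi: "\<pi>s i < n" using permutes_in_image[OF assms] ik by auto
  have m1: "(\<lambda>\<omega>. \<omega> (True, i, k)) \<in> borel_measurable (noise n d)"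
    using ik by (intro comp_meas) (auto simp: idx_def)
  have m2: "(\<lambda>\<omega>. \<omega> (False, i, k)) \<in> borel_measurable (noise n d)"
    using ik by (intro comp_meas) (auto simp: idx_def)
  show "(\<lambda>\<omega>. case x of (b, i, k) \<Rightarrow> if b then \<theta> (\<pi>s i) k + \<sigma> (\<pi>s i) * \<omega> (True, i, k)
          else \<theta> i k + \<sigma> i * \<omega> (False, i, k)) \<in> measurable (noise n d) borel"
    unfolding xe using m1 m2 by (cases b) auto
qed

lemma delta_H_le1: "0 < n \<Longrightarrow> delta_H n p q \<le> 1"
proof -
  assume n: "0 < n"
  have "card {k \<in> {..<n}. p k \<noteq> q k} \<le> card {..<n}" by (rule card_mono) auto
  then show ?thesis using n by (simp add: delta_H_def)
qed

lemma delta_H_nonneg: "0 \<le> delta_H n p q" by (simp add: delta_H_def)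

lemma delta_H_self: "delta_H n p p = 0" by (simp add: delta_H_def)

theorem theorem7:
  fixes n d :: nat and \<alpha> :: real and \<sigma> :: "nat \<Rightarrow> real"
    and \<pi>s :: "nat \<Rightarrow> nat" and \<theta> :: "nat \<Rightarrow> nat \<Rightarrow> real"
    and est :: "(bool \<times> nat \<times> nat \<Rightarrow> real) \<Rightarrow> (nat \<Rightarrow> nat)"
  assumes "n \<ge> 2" and "d \<ge> 1" and "0 < \<alpha>" and "\<alpha> < 1"
    and "\<forall>i<n. \<sigma> i > 0"
    and "\<pi>s permutes {..<n}"
    and "est \<in> measurable (obs_space n d) (count_space UNIV)"
    and "(\<forall>y \<in> space (obs_space n d). is_argmin_perm n (cost_LSNS n d \<sigma> (\<sigma> \<circ> \<pi>s) y) (est y))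
         \<or> (\<forall>y \<in> space (obs_space n d). is_argmin_perm n (cost_LSL n d y) (est y))"
    and "kappa_bar n d \<theta> \<sigma> \<ge>
           4 * max (sqrt (2 * ln (8 * real n ^ 2 / \<alpha>))) (root 4 (real d * ln (4 * real n ^ 2 / \<alpha>)))"
  shows "(\<integral>y. delta_H n (est y) \<pi>s \<partial>data_law n d \<theta> \<sigma> \<pi>s) \<le> \<alpha>"
proof -
  note n = assms(1) and dd = assms(2) and al = assms(3,4) and sig = assms(5) and perm = assms(6)
    and estm = assms(7) and argm = assms(8) and kap = assms(9)
  define P where "P = noise n d"
  interpret P: prob_space P unfolding P_def by (rule prob_noise)
  define kb where "kb = kappa_bar n d \<theta> \<sigma>"
  define k2 where "k2 = kb^2"
  define L where "L = ln (4 * real n ^ 2 / \<alpha>)"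
  define T where "T = real d + k2/4"
  define St where "St j i \<omega> = Stat n d \<theta> \<sigma> \<pi>s j i \<omega>" for j i \<omega>
  have npos: "real n \<ge> 2" using n by simp
  have big: "4 * real n ^ 2 / \<alpha> > 1"
  proof -
    have "4 * real n ^ 2 \<ge> 16" using npos power_mono[of 2 "real n" 2] by simp
    then have "4 * real n ^ 2 > \<alpha>" using al by simp
    then show ?thesis using al by simp
  qed
  have Lp: "L > 0" unfolding L_def using big by simp
  have eL: "exp (-L) = \<alpha> / (4 * real n ^ 2)"
  proof -
    have "exp L = 4 * real n ^ 2 / \<alpha>" unfolding L_def using big by simp
    then show ?thesis by (simp add: exp_minus)
  qed
  have l8: "ln (8 * real n ^ 2 / \<alpha>) \<ge> L"
  proof -
    have b0: "0 < 4 * real n ^ 2 / \<alpha>" using big by simp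
    have "4 * real n ^ 2 / \<alpha> \<le> 8 * real n ^ 2 / \<alpha>" using al by (intro divide_right_mono) auto
    then show ?thesis unfolding L_def using b0 by simp
  qed
  have sq8: "sqrt (2 * ln (8 * real n ^ 2 / \<alpha>)) \<ge> 0" using l8 Lp by simp
  have kb0: "kb \<ge> 0" using kap sq8 unfolding kb_def by linarith
  have k2a: "k2 \<ge> 32 * L"
  proof -
    have "kb \<ge> 4 * sqrt (2 * ln (8 * real n ^ 2 / \<alpha>))" using kap unfolding kb_def by simp
    then have "kb^2 \<ge> (4 * sqrt (2 * ln (8 * real n ^ 2 / \<alpha>)))^2" using sq8 by (intro power_mono) auto
    also have "(4 * sqrt (2 * ln (8 * real n ^ 2 / \<alpha>)))^2 = 32 * ln (8 * real n ^ 2 / \<alpha>)"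
      using l8 Lp by (simp add: power_mult_distrib)
    finally show ?thesis using l8 unfolding k2_def by simp
  qed
  have k2b: "k2^2 \<ge> 256 * real d * L"
  proof -
    have dl: "real d * L \<ge> 0" using Lp by simp
    have r0: "root 4 (real d * L) \<ge> 0" using dl by simp
    have "kb \<ge> 4 * root 4 (real d * L)" using kap unfolding kb_def L_def by simp
    then have "kb^4 \<ge> (4 * root 4 (real d * L))^4" using r0 by (intro power_mono) auto
    also have "(4 * root 4 (real d * L))^4 = 256 * (real d * L)"
      using dl by (simp add: power_mult_distrib real_root_pow_pos2)
    finally show ?thesis unfolding k2_def by (simp add: power_mult[symmetric])
  qed
  have pin: "\<pi>s i < n" if "i < n" for i using permutes_in_image[OF perm] that by auto
  have sigp: "0 < \<sigma> (\<pi>s i)" if "i < n" for i using sig pin that by auto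
  have Mcross: "Mdist d \<theta> \<sigma> \<pi>s j i \<ge> k2" if "i < n" "j < n" "j \<noteq> \<pi>s i" for i j
  proof -
    define F where "F i j = sqrt (sqdist d (\<theta> i) (\<theta> j)) / sqrt ((\<sigma> i)^2 + (\<sigma> j)^2)" for i j
    have fin: "finite {F i j | i j. i < n \<and> j < n \<and> i \<noteq> j}"
    proof (rule finite_subset)
      show "{F i j | i j. i < n \<and> j < n \<and> i \<noteq> j} \<subseteq> (\<lambda>(i,j). F i j) ` ({..<n} \<times> {..<n})" by auto
    qed auto
    have mem: "F j (\<pi>s i) \<in> {F i j | i j. i < n \<and> j < n \<and> i \<noteq> j}"
      using that pin by blast
    have "kb \<le> F j (\<pi>s i)" unfolding kb_def kappa_bar_def F_def[symmetric]
      using Min_le[OF fin mem] by simp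
    then have "kb^2 \<le> (F j (\<pi>s i))^2" using kb0 by (intro power_mono) auto
    also have "(F j (\<pi>s i))^2 = Mdist d \<theta> \<sigma> \<pi>s j i"
    proof -
      have "sqdist d (\<theta> j) (\<theta> (\<pi>s i)) \<ge> 0" by (simp add: sqdist_def sum_nonneg)
      moreover have "(\<sigma> j)^2 + (\<sigma> (\<pi>s i))^2 \<ge> 0" by simp
      ultimately show ?thesis by (simp add: F_def Mdist_def power_divide)
    qed
    finally show ?thesis unfolding k2_def .
  qed
  have Mdiag: "Mdist d \<theta> \<sigma> \<pi>s (\<pi>s i) i = 0" for i by (simp add: Mdist_def sqdist_def)
  define Bad where "Bad j i = (if j = \<pi>s i then {\<omega>\<in>space P. T \<le> St j i \<omega>} \<union> {\<omega>\<in>space P. St j i \<omega> \<le> 0}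
      else {\<omega>\<in>space P. St j i \<omega> \<le> T})" for j i
  have Stm: "(\<lambda>\<omega>. St j i \<omega>) \<in> borel_measurable P" if "i < n" "j < n" for i j
    unfolding St_def P_def using that sig sigp by (intro stat_meas) auto
  have Bsets: "Bad j i \<in> sets P" if "i < n" "j < n" for i j
    using Stm[OF that] unfolding Bad_def by (cases "j = \<pi>s i") (simp_all, measurable)
  have Bmeas: "measure P (Bad j i) \<le> 2 * exp (-L)" if ij: "i < n" "j < n" for i j
  proof (cases "j = \<pi>s i")
    case True
    obtain lam where lam: "0 \<le> lam" "lam < 1/2" "exp (-lam*(real d + k2/4)) / sqrt (1 - 2*lam) ^ d \<le> exp (-L)"
      using diag_bound[OF dd Lp, of "k2/4"] k2a k2b by (auto simp: power_divide)
    obtain u where u: "0 \<le> u" "1 / sqrt (1 + 2*u) ^ d \<le> exp (-L)"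
      using zero_bound[OF dd Lp] by auto
    have a: "measure P {\<omega>\<in>space P. T \<le> St j i \<omega>} \<le> exp (-L)"
    proof -
      have "measure P {\<omega>\<in>space P. T \<le> St j i \<omega>}
          \<le> exp (-lam*T) * (exp (lam * Mdist d \<theta> \<sigma> \<pi>s j i / (1 - 2*lam)) / sqrt (1 - 2*lam) ^ d)"
        unfolding P_def St_def using ij sig sigp lam by (intro tail_up) auto
      also have "\<dots> = exp (-lam*(real d + k2/4)) / sqrt (1 - 2*lam) ^ d"
        using True Mdiag by (simp add: T_def)
      finally show ?thesis using lam(3) by linarith
    qed
    have b: "measure P {\<omega>\<in>space P. St j i \<omega> \<le> 0} \<le> exp (-L)"
    proof -
      have "measure P {\<omega>\<in>space P. St j i \<omega> \<le> 0}
          \<le> exp (u*0) * (exp (- u * Mdist d \<theta> \<sigma> \<pi>s j i / (1 + 2*u)) / sqrt (1 + 2*u) ^ d)"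
        unfolding P_def St_def using ij sig sigp u by (intro tail_low) auto
      also have "\<dots> = 1 / sqrt (1 + 2*u) ^ d"
        using True Mdiag by simp
      finally show ?thesis using u(2) by linarith
    qed
    have "measure P (Bad j i) \<le> measure P {\<omega>\<in>space P. T \<le> St j i \<omega>} + measure P {\<omega>\<in>space P. St j i \<omega> \<le> 0}"
    proof -
      have s1: "{\<omega>\<in>space P. T \<le> St j i \<omega>} \<in> sets P" using Stm[OF ij] by measurable
      have s2: "{\<omega>\<in>space P. St j i \<omega> \<le> 0} \<in> sets P" using Stm[OF ij] by measurable
      show ?thesis unfolding Bad_def if_P[OF True] by (rule measure_Un_le[OF s1 s2])
    qed
    then show ?thesis using a b by simp
  next
    case False
    obtain u where u: "0 \<le> u" "exp (u*(real d + k2/4)) * exp (- u * Mdist d \<theta> \<sigma> \<pi>s j i / (1 + 2*u)) / sqrt (1 + 2*u) ^ d \<le> exp (-L)"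
      using cross_bound[OF dd Lp k2a k2b Mcross[OF ij False]] by auto
    have "measure P (Bad j i) \<le> exp (u*T) * (exp (- u * Mdist d \<theta> \<sigma> \<pi>s j i / (1 + 2*u)) / sqrt (1 + 2*u) ^ d)"
      unfolding Bad_def if_not_P[OF False] P_def St_def by (rule tail_low) (use ij sig sigp u in auto)
    also have "\<dots> \<le> exp (-L)" using u(2) by (simp add: T_def)
    finally show ?thesis using exp_gt_zero[of "-L"] by linarith
  qed
  define U where "U = (\<Union>ij\<in>{..<n}\<times>{..<n}. Bad (fst ij) (snd ij))"
  have Usets: "U \<in> sets P" unfolding U_def using Bsets by (intro sets.finite_UN) auto
  have Umeas: "measure P U \<le> \<alpha>"
  proof -
    have "measure P U \<le> (\<Sum>ij\<in>{..<n}\<times>{..<n}. measure P (Bad (fst ij) (snd ij)))"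
      unfolding U_def using Bsets by (intro measure_UNION_le) auto
    also have "\<dots> \<le> (\<Sum>ij\<in>{..<n}\<times>{..<n}. 2 * exp (-L))"
      using Bmeas by (intro sum_mono) auto
    also have "\<dots> = real n ^ 2 * (2 * exp (-L))" by (simp add: power2_eq_square)
    also have "\<dots> = \<alpha> / 2" unfolding eL using npos by (simp add: field_simps)
    finally show ?thesis using al by linarith
  qed
  have good: "est (obs n d \<theta> \<sigma> \<pi>s \<omega>) = \<pi>s" if \<omega>: "\<omega> \<in> space P" "\<omega> \<notin> U" for \<omega>
  proof -
    have nb: "\<omega> \<notin> Bad j i" if "i < n" "j < n" for i j using \<omega>(2) that unfolding U_def by auto
    have G1: "St (\<pi>s i) i \<omega> < T" "0 < St (\<pi>s i) i \<omega>" if "i < n" for i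
      using nb[OF that pin[OF that]] \<omega>(1) unfolding Bad_def by auto
    have G2: "T < St j i \<omega>" if "i < n" "j < n" "j \<noteq> \<pi>s i" for i j
      using nb[OF that(1,2)] \<omega>(1) that(3) unfolding Bad_def by auto
    have Tp: "0 < T" using k2a Lp by (simp add: T_def k2_def)
    define y where "y = obs n d \<theta> \<sigma> \<pi>s \<omega>"
    have ysp: "y \<in> space (obs_space n d)"
      unfolding y_def using measurable_space[OF obs_meas[OF perm] \<omega>(1)[unfolded P_def]] .
    have cLSNS: "cost_LSNS n d \<sigma> (\<sigma> \<circ> \<pi>s) y q = (\<Sum>i<n. St (q i) i \<omega>)" for q
      by (simp add: cost_LSNS_def St_def Stat_def y_def)
    have cLSL: "cost_LSL n d y q = (\<Sum>i<n. ln (St (q i) i \<omega> * ((\<sigma> (q i))^2 + (\<sigma> (\<pi>s i))^2)))"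
      if "q permutes {..<n}" for q
      unfolding cost_LSL_def
    proof (intro sum.cong refl)
      fix i assume "i \<in> {..<n}"
      then have "q i < n" "i < n" using permutes_in_image[OF that] by auto
      then have ss: "\<sigma> (q i) > 0" "\<sigma> (\<pi>s i) > 0" using sig sigp by auto
      then have "(\<sigma> (q i))^2 + (\<sigma> (\<pi>s i))^2 > 0" by (intro add_pos_pos) auto
      note ss this
      then show "ln (sqdist d (Xobs y (q i)) (Xsharp y i)) = ln (St (q i) i \<omega> * ((\<sigma> (q i))^2 + (\<sigma> (\<pi>s i))^2))"
        by (simp add: St_def Stat_def y_def)
    qed
    show ?thesis
    proof (rule ccontr)
      assume ne: "est (obs n d \<theta> \<sigma> \<pi>s \<omega>) \<noteq> \<pi>s"
      from argm show False
      proof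
        assume A: "\<forall>y \<in> space (obs_space n d). is_argmin_perm n (cost_LSNS n d \<sigma> (\<sigma> \<circ> \<pi>s) y) (est y)"
        then have q: "est y permutes {..<n}" and le: "cost_LSNS n d \<sigma> (\<sigma> \<circ> \<pi>s) y (est y) \<le> cost_LSNS n d \<sigma> (\<sigma> \<circ> \<pi>s) y \<pi>s"
          using ysp perm unfolding is_argmin_perm_def by auto
        have "(\<Sum>i<n. St (\<pi>s i) i \<omega>) < (\<Sum>i<n. St (est y i) i \<omega>)"
          using ne G1 G2 by (intro LSNS_good[OF perm q, where T=T]) (auto simp: y_def)
        then show False using le unfolding cLSNS by simp
      next
        assume A: "\<forall>y \<in> space (obs_space n d). is_argmin_perm n (cost_LSL n d y) (est y)"
        then have q: "est y permutes {..<n}" and le: "cost_LSL n d y (est y) \<le> cost_LSL n d y \<pi>s"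
          using ysp perm unfolding is_argmin_perm_def by auto
        have "(\<Sum>i<n. ln (St (\<pi>s i) i \<omega> * ((\<sigma> (\<pi>s i))^2 + (\<sigma> (\<pi>s i))^2)))
            < (\<Sum>i<n. ln (St (est y i) i \<omega> * ((\<sigma> (est y i))^2 + (\<sigma> (\<pi>s i))^2)))"
          using ne G1 G2 sig Tp by (intro LSL_good[OF perm q, where T=T]) (auto simp: y_def)
        then show False using le unfolding cLSL[OF q] cLSL[OF perm] by simp
      qed
    qed
  qed
  have fm: "(\<lambda>y. delta_H n (est y) \<pi>s) \<in> borel_measurable (obs_space n d)"
    using measurable_compose[OF estm, of "\<lambda>p. delta_H n p \<pi>s" borel] by simp
  have "(\<integral>y. delta_H n (est y) \<pi>s \<partial>data_law n d \<theta> \<sigma> \<pi>s) = (\<integral>\<omega>. delta_H n (est (obs n d \<theta> \<sigma> \<pi>s \<omega>)) \<pi>s \<partial>P)"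
    unfolding data_law_def P_def by (rule integral_distr[OF obs_meas[OF perm] fm])
  also have "\<dots> \<le> (\<integral>\<omega>. indicator U \<omega> \<partial>P)"
  proof (rule integral_mono)
    have fm2: "(\<lambda>\<omega>. delta_H n (est (obs n d \<theta> \<sigma> \<pi>s \<omega>)) \<pi>s) \<in> borel_measurable P"
      unfolding P_def using measurable_compose[OF obs_meas[OF perm] fm] by simp
    show "integrable P (\<lambda>\<omega>. delta_H n (est (obs n d \<theta> \<sigma> \<pi>s \<omega>)) \<pi>s)"
      using fm2 delta_H_le1 delta_H_nonneg n by (intro P.integrable_const_bound[where B=1]) auto
    show "integrable P (indicator U :: _ \<Rightarrow> real)"
      using Usets by (intro P.integrable_const_bound[where B=1]) (auto simp: indicator_def)
    fix \<omega> assume "\<omega> \<in> space P"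
    then show "delta_H n (est (obs n d \<theta> \<sigma> \<pi>s \<omega>)) \<pi>s \<le> indicator U \<omega>"
      using good delta_H_le1 delta_H_self n by (cases "\<omega> \<in> U") auto
  qed
  also have "\<dots> = measure P U" using Usets by (simp add: Int_absorb2 sets.sets_into_space)
  finally show ?thesis using Umeas by linarith
qed


end
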